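(* Let $P$ be a closed subset of $\mathbb{R}^n$ having the origin as an interior point, and let $v\in\mathbb{R}^n$ be such that $\int_P x\cdot v\,d\lambda(x)$ exists and is strictly positive, where $\lambda$ is Lebesgue measure. Then the maximum of $\lambda(Q)$ over (measurable) subsets $Q\subset P$ satisfying $\int_Q v\cdot x\,d\lambda(x)=0$ is attained at $Q=P\cap H$ for a closed half-space $H$ with outward pointing normal $v$. *)

theory Defs
  imports "HOL-Analysis.Analysis"
begin

end

theory Submission
  imports Defs
begin


lemma halfspace_leb: "{x::'a::euclidean_space. x \<bullet> v \<le> c} \<in> sets lebesgue"
proof -
  have "closed {x::'a. x \<bullet> v \<le> c}"
    using closed_halfspace_le[of v c] by (simp add: inner_commute)
  then show ?thesis by (simp add: borel_closed)
qed

lemma seq_conv: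
  fixes P :: "'a::euclidean_space set" and v :: 'a
  assumes int: "set_integrable lebesgue P (\<lambda>x. x \<bullet> v)" and Pm: "P \<in> sets lebesgue"
    and lim: "AE x in lebesgue. (\<lambda>n. indicator {x. x \<bullet> v \<le> X n} x :: real) \<longlonglongrightarrow> indicator {x. x \<bullet> v \<le> a} x"
  shows "(\<lambda>n. LINT x:(P \<inter> {x. x \<bullet> v \<le> X n})|lebesgue. x \<bullet> v) \<longlonglongrightarrow> (LINT x:(P \<inter> {x. x \<bullet> v \<le> a})|lebesgue. x \<bullet> v)"
proof -
  have I: "integrable lebesgue (\<lambda>x. indicator P x *\<^sub>R (x \<bullet> v))"
    using int by (simp add: set_integrable_def)
  have si: "set_integrable lebesgue (P \<inter> {x. x \<bullet> v \<le> c}) (\<lambda>x. x \<bullet> v)" for c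
    by (rule set_integrable_subset[OF int]) (use Pm halfspace_leb in auto)
  show ?thesis
    unfolding set_lebesgue_integral_def
  proof (rule integral_dominated_convergence[where w="\<lambda>x. norm (indicator P x *\<^sub>R (x \<bullet> v))"])
    show "(\<lambda>x. indicator (P \<inter> {x. x \<bullet> v \<le> a}) x *\<^sub>R (x \<bullet> v)) \<in> borel_measurable lebesgue"
      using si[of a] by (simp add: set_integrable_def)
    show "(\<lambda>x. indicator (P \<inter> {x. x \<bullet> v \<le> X i}) x *\<^sub>R (x \<bullet> v)) \<in> borel_measurable lebesgue" for i
      using si[of "X i"] by (simp add: set_integrable_def)
    show "integrable lebesgue (\<lambda>x. norm (indicator P x *\<^sub>R (x \<bullet> v)))"
      using I by (rule integrable_norm)
    show "AE x in lebesgue. norm (indicator (P \<inter> {x. x \<bullet> v \<le> X n}) x *\<^sub>R (x \<bullet> v)) \<le> norm (indicator P x *\<^sub>R (x \<bullet> v))" for n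
      by (auto split: split_indicator)
    show "AE x in lebesgue. (\<lambda>n. indicator (P \<inter> {x. x \<bullet> v \<le> X n}) x *\<^sub>R (x \<bullet> v)) \<longlonglongrightarrow> indicator (P \<inter> {x. x \<bullet> v \<le> a}) x *\<^sub>R (x \<bullet> v)"
      using lim
    proof eventually_elim
      case (elim x)
      have "(\<lambda>n. indicator P x * (indicator {x. x \<bullet> v \<le> X n} x * (x \<bullet> v))) \<longlonglongrightarrow> indicator P x * (indicator {x. x \<bullet> v \<le> a} x * (x \<bullet> v))"
        by (intro tendsto_intros elim)
      then show ?case by (simp add: indicator_inter_arith mult.assoc)
    qed
  qed
qed



lemma bathtub:
  fixes P Q H :: "'a::euclidean_space set" and v :: 'a
  assumes int: "set_integrable lebesgue P (\<lambda>x. x \<bullet> v)" and Pm: "P \<in> sets lebesgue"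
    and c: "c \<ge> 0" and Hdef: "H = P \<inter> {x. x \<bullet> v \<le> c}" and Hm: "H \<in> sets lebesgue"
    and H0: "(LINT x:H|lebesgue. x \<bullet> v) = 0"
    and Qm: "Q \<in> sets lebesgue" and QP: "Q \<subseteq> P" and Q0: "(LINT x:Q|lebesgue. x \<bullet> v) = 0"
  shows "emeasure lebesgue Q \<le> emeasure lebesgue H"
proof -
  define A where "A = Q - H"
  define B where "B = H - Q"
  have Am: "A \<in> sets lebesgue" and Bm: "B \<in> sets lebesgue" and QHm: "Q \<inter> H \<in> sets lebesgue"
    using Qm Hm by (auto simp: A_def B_def)
  have HP: "H \<subseteq> P" using Hdef by auto
  have siA: "set_integrable lebesgue A (\<lambda>x. x \<bullet> v)"
    by (rule set_integrable_subset[OF int Am]) (use QP in \<open>auto simp: A_def\<close>)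
  have siB: "set_integrable lebesgue B (\<lambda>x. x \<bullet> v)"
    by (rule set_integrable_subset[OF int Bm]) (use HP in \<open>auto simp: B_def\<close>)
  have siQH: "set_integrable lebesgue (Q \<inter> H) (\<lambda>x. x \<bullet> v)"
    by (rule set_integrable_subset[OF int QHm]) (use QP in auto)
  have "Q = (Q \<inter> H) \<union> A" by (auto simp: A_def)
  then have e1: "(LINT x:Q|lebesgue. x \<bullet> v) = (LINT x:Q \<inter> H|lebesgue. x \<bullet> v) + (LINT x:A|lebesgue. x \<bullet> v)"
    using set_integral_Un[OF _ siQH siA] by (metis Int_Diff_disjoint A_def)
  have "H = (Q \<inter> H) \<union> B" by (auto simp: B_def)
  then have e2: "(LINT x:H|lebesgue. x \<bullet> v) = (LINT x:Q \<inter> H|lebesgue. x \<bullet> v) + (LINT x:B|lebesgue. x \<bullet> v)"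
    using set_integral_Un[OF _ siQH siB] by (metis Diff_disjoint Int_Diff B_def inf_commute inf_left_commute)
  have AB: "(LINT x:A|lebesgue. x \<bullet> v) = (LINT x:B|lebesgue. x \<bullet> v)"
    using e1 e2 H0 Q0 by simp
  have Apos: "x \<in> A \<Longrightarrow> c < x \<bullet> v" for x using QP by (auto simp: A_def Hdef)
  have Apos': "x \<in> A \<Longrightarrow> 0 \<le> x \<bullet> v" for x using Apos[of x] c by linarith
  have Ble: "x \<in> B \<Longrightarrow> x \<bullet> v \<le> c" for x by (auto simp: B_def Hdef)
  have IA: "integrable lebesgue (\<lambda>x. indicator A x * (x \<bullet> v))"
    using siA by (simp add: set_integrable_def)
  have IB: "integrable lebesgue (\<lambda>x. indicator B x * (x \<bullet> v))"
    using siB by (simp add: set_integrable_def)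
  have nnA: "(\<integral>\<^sup>+ x. ennreal (indicator A x * (x \<bullet> v)) \<partial>lebesgue) = ennreal (LINT x:A|lebesgue. x \<bullet> v)"
    unfolding set_lebesgue_integral_def
  proof -
    have "AE x in lebesgue. 0 \<le> indicator A x * (x \<bullet> v)"
      by (intro AE_I2) (simp add: Apos' split: split_indicator)
    then show "(\<integral>\<^sup>+ x. ennreal (indicator A x * (x \<bullet> v)) \<partial>lebesgue) = ennreal (LINT x|lebesgue. indicator A x *\<^sub>R (x \<bullet> v))"
      using nn_integral_eq_integral[OF IA] by simp
  qed
  have hA: "ennreal c * emeasure lebesgue A \<le> ennreal (LINT x:A|lebesgue. x \<bullet> v)"
  proof -
    have "ennreal c * emeasure lebesgue A = (\<integral>\<^sup>+ x. ennreal c * indicator A x \<partial>lebesgue)"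
      using nn_integral_cmult_indicator[OF Am] by simp
    also have "\<dots> \<le> (\<integral>\<^sup>+ x. ennreal (indicator A x * (x \<bullet> v)) \<partial>lebesgue)"
      by (intro nn_integral_mono) (auto split: split_indicator dest!: Apos intro!: ennreal_leI)
    finally show ?thesis using nnA by simp
  qed
  have IBm: "integrable lebesgue (\<lambda>x. indicator B x * max (x \<bullet> v) 0)"
  proof -
    have "integrable lebesgue (\<lambda>x. max (indicator B x * (x \<bullet> v)) 0)"
      using IB by auto
    moreover have "(\<lambda>x. max (indicator B x * (x \<bullet> v)) 0) = (\<lambda>x. indicator B x * max (x \<bullet> v) 0)"
      by (auto split: split_indicator)
    ultimately show ?thesis by simp
  qed
  have hB1: "(LINT x:B|lebesgue. x \<bullet> v) \<le> (LINT x:B|lebesgue. max (x \<bullet> v) 0)"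
    by (rule set_integral_mono[OF siB]) (use IBm in \<open>auto simp: set_integrable_def\<close>)
  have hB: "ennreal (LINT x:B|lebesgue. x \<bullet> v) \<le> ennreal c * emeasure lebesgue B"
  proof -
    have "ennreal (LINT x:B|lebesgue. x \<bullet> v) \<le> ennreal (LINT x:B|lebesgue. max (x \<bullet> v) 0)"
      using hB1 by (rule ennreal_leI)
    also have "\<dots> = (\<integral>\<^sup>+ x. ennreal (indicator B x * max (x \<bullet> v) 0) \<partial>lebesgue)"
      unfolding set_lebesgue_integral_def
      by (simp add: nn_integral_eq_integral[OF IBm])
    also have "\<dots> \<le> (\<integral>\<^sup>+ x. ennreal c * indicator B x \<partial>lebesgue)"
      by (intro nn_integral_mono) (use Ble c in \<open>auto split: split_indicator intro: ennreal_leI\<close>)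
    also have "\<dots> = ennreal c * emeasure lebesgue B"
      using nn_integral_cmult_indicator[OF Bm] by simp
    finally show ?thesis .
  qed
  have AleB: "emeasure lebesgue A \<le> emeasure lebesgue B"
  proof (cases "c = 0")
    case False
    with c have "c > 0" by simp
    have "ennreal c * emeasure lebesgue A \<le> ennreal c * emeasure lebesgue B"
      using hA hB AB by simp
    then show ?thesis using \<open>c > 0\<close> ennreal_mult_le_mult_iff[of "ennreal c"] by simp
  next
    case True
    have "(LINT x:B|lebesgue. x \<bullet> v) \<le> (LINT x:B|lebesgue. 0)"
      by (rule set_integral_mono[OF siB]) (use Ble True in auto)
    then have "(LINT x:A|lebesgue. x \<bullet> v) \<le> 0" using AB by simp
    then have "(\<integral>\<^sup>+ x. ennreal (indicator A x * (x \<bullet> v)) \<partial>lebesgue) = 0"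
      using nnA by (simp add: ennreal_eq_0_iff)
    then have "AE x in lebesgue. ennreal (indicator A x * (x \<bullet> v)) = 0"
      using nn_integral_0_iff_AE[of "\<lambda>x. ennreal (indicator A x * (x \<bullet> v))" lebesgue] IA
      by (simp add: borel_measurable_integrable)
    then have "AE x in lebesgue. x \<notin> A"
      by eventually_elim (use Apos True in \<open>fastforce split: split_indicator simp: ennreal_eq_0_iff\<close>)
    then have "emeasure lebesgue A = 0"
      using AE_iff_measurable[OF Am, of "\<lambda>x. x \<notin> A"] by simp
    then show ?thesis by simp
  qed
  have "emeasure lebesgue Q = emeasure lebesgue (Q \<inter> H) + emeasure lebesgue A"
  proof -
    have "Q \<inter> H \<union> A = Q" "Q \<inter> H \<inter> A = {}" by (auto simp: A_def)
    then show ?thesis using plus_emeasure[OF QHm Am] by simp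
  qed
  also have "\<dots> \<le> emeasure lebesgue (Q \<inter> H) + emeasure lebesgue B"
    using AleB by (rule add_left_mono)
  also have "\<dots> = emeasure lebesgue H"
  proof -
    have "Q \<inter> H \<union> B = H" "Q \<inter> H \<inter> B = {}" by (auto simp: B_def)
    then show ?thesis using plus_emeasure[OF QHm Bm] by simp
  qed
  finally show ?thesis .
qed


lemma g_cont:
  fixes P :: "'a::euclidean_space set" and v :: 'a
  assumes int: "set_integrable lebesgue P (\<lambda>x. x \<bullet> v)" and Pm: "P \<in> sets lebesgue" and v: "v \<noteq> 0"
  shows "continuous_on UNIV (\<lambda>c. LINT x:(P \<inter> {x. x \<bullet> v \<le> c})|lebesgue. x \<bullet> v)"
proof (rule continuous_on_sequentiallyI)
  fix X :: "nat \<Rightarrow> real" and a assume X: "X \<longlonglongrightarrow> a"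
  have neg: "negligible {x::'a. v \<bullet> x = a}" using negligible_hyperplane v by blast
  then have N: "{x::'a. v \<bullet> x = a} \<in> null_sets lebesgue" by (simp add: negligible_iff_null_sets)
  have "AE x in lebesgue. (\<lambda>n. indicator {x. x \<bullet> v \<le> X n} x :: real) \<longlonglongrightarrow> indicator {x. x \<bullet> v \<le> a} x"
  proof (rule AE_I'[OF N], safe)
    fix x :: 'a
    assume nt: "\<not> (\<lambda>n. indicator {x. x \<bullet> v \<le> X n} x :: real) \<longlonglongrightarrow> indicator {x. x \<bullet> v \<le> a} x"
    show "v \<bullet> x = a"
    proof (rule ccontr)
      assume ne: "v \<bullet> x \<noteq> a"
      show False
      proof (cases "x \<bullet> v < a")
        case True
        then have "eventually (\<lambda>n. x \<bullet> v < X n) sequentially"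
          using order_tendstoD(1)[OF X True] by simp
        then have "eventually (\<lambda>n. (indicator {x. x \<bullet> v \<le> X n} x :: real) = indicator {x. x \<bullet> v \<le> a} x) sequentially"
          by eventually_elim (use True in auto)
        then have "(\<lambda>n. indicator {x. x \<bullet> v \<le> X n} x :: real) \<longlonglongrightarrow> indicator {x. x \<bullet> v \<le> a} x"
          by (rule tendsto_eventually)
        with nt show False by simp
      next
        case False
        with ne have F: "x \<bullet> v > a" by (simp add: inner_commute)
        then have "eventually (\<lambda>n. X n < x \<bullet> v) sequentially"
          using order_tendstoD(2)[OF X F] by simp
        then have "eventually (\<lambda>n. (indicator {x. x \<bullet> v \<le> X n} x :: real) = indicator {x. x \<bullet> v \<le> a} x) sequentially"
          by eventually_elim (use F in auto)
        then have "(\<lambda>n. indicator {x. x \<bullet> v \<le> X n} x :: real) \<longlonglongrightarrow> indicator {x. x \<bullet> v \<le> a} x"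
          by (rule tendsto_eventually)
        with nt show False by simp
      qed
    qed
  qed
  then show "(\<lambda>n. LINT x:(P \<inter> {x. x \<bullet> v \<le> X n})|lebesgue. x \<bullet> v) \<longlonglongrightarrow> (LINT x:(P \<inter> {x. x \<bullet> v \<le> a})|lebesgue. x \<bullet> v)"
    by (rule seq_conv[OF int Pm])
qed

lemma g_top:
  fixes P :: "'a::euclidean_space set" and v :: 'a
  assumes int: "set_integrable lebesgue P (\<lambda>x. x \<bullet> v)" and Pm: "P \<in> sets lebesgue"
  shows "(\<lambda>n. LINT x:(P \<inter> {x. x \<bullet> v \<le> real n})|lebesgue. x \<bullet> v) \<longlonglongrightarrow> (LINT x:P|lebesgue. x \<bullet> v)"
proof -
  have I: "integrable lebesgue (\<lambda>x. indicator P x *\<^sub>R (x \<bullet> v))"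
    using int by (simp add: set_integrable_def)
  have si: "set_integrable lebesgue (P \<inter> {x. x \<bullet> v \<le> c}) (\<lambda>x. x \<bullet> v)" for c
    by (rule set_integrable_subset[OF int]) (use Pm halfspace_leb in auto)
  show ?thesis
    unfolding set_lebesgue_integral_def
  proof (rule integral_dominated_convergence[where w="\<lambda>x. norm (indicator P x *\<^sub>R (x \<bullet> v))"])
    show "(\<lambda>x. indicator P x *\<^sub>R (x \<bullet> v)) \<in> borel_measurable lebesgue"
      using I by auto
    show "(\<lambda>x. indicator (P \<inter> {x. x \<bullet> v \<le> real i}) x *\<^sub>R (x \<bullet> v)) \<in> borel_measurable lebesgue" for i
      using si[of "real i"] by (simp add: set_integrable_def)
    show "integrable lebesgue (\<lambda>x. norm (indicator P x *\<^sub>R (x \<bullet> v)))"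
      using I by (rule integrable_norm)
    show "AE x in lebesgue. norm (indicator (P \<inter> {x. x \<bullet> v \<le> real n}) x *\<^sub>R (x \<bullet> v)) \<le> norm (indicator P x *\<^sub>R (x \<bullet> v))" for n
      by (auto split: split_indicator)
    show "AE x in lebesgue. (\<lambda>n. indicator (P \<inter> {x. x \<bullet> v \<le> real n}) x *\<^sub>R (x \<bullet> v)) \<longlonglongrightarrow> indicator P x *\<^sub>R (x \<bullet> v)"
    proof (rule AE_I2)
      fix x :: 'a
      obtain N :: nat where N: "x \<bullet> v \<le> real N" using real_arch_simple by blast
      have "eventually (\<lambda>n. indicator (P \<inter> {x. x \<bullet> v \<le> real n}) x *\<^sub>R (x \<bullet> v) = indicator P x *\<^sub>R (x \<bullet> v)) sequentially"
        unfolding eventually_sequentially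
      proof (intro exI[of _ N] allI impI)
        fix n assume "N \<le> n"
        then have "real N \<le> real n" by simp
        with N show "indicator (P \<inter> {x. x \<bullet> v \<le> real n}) x *\<^sub>R (x \<bullet> v) = indicator P x *\<^sub>R (x \<bullet> v)"
          by (auto split: split_indicator)
      qed
      then show "(\<lambda>n. indicator (P \<inter> {x. x \<bullet> v \<le> real n}) x *\<^sub>R (x \<bullet> v)) \<longlonglongrightarrow> indicator P x *\<^sub>R (x \<bullet> v)"
        by (rule tendsto_eventually)
    qed
  qed
qed

theorem lemma3p6:
  fixes P :: "'a::euclidean_space set" and v :: 'a
  assumes "closed P"
    and "0 \<in> interior P"
    and "set_integrable lebesgue P (\<lambda>x. x \<bullet> v)"
    and "(LINT x:P|lebesgue. x \<bullet> v) > 0"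
  shows "\<exists>c::real.
           (LINT x:(P \<inter> {x. x \<bullet> v \<le> c})|lebesgue. x \<bullet> v) = 0 \<and>
           (\<forall>Q. Q \<in> sets lebesgue \<longrightarrow> Q \<subseteq> P \<longrightarrow>
                (LINT x:Q|lebesgue. x \<bullet> v) = 0 \<longrightarrow>
                emeasure lebesgue Q \<le> emeasure lebesgue (P \<inter> {x. x \<bullet> v \<le> c}))"
proof -
  note int = assms(3)
  have Pm: "P \<in> sets lebesgue" using assms(1) by (simp add: borel_closed)
  have v: "v \<noteq> 0"
  proof
    assume "v = 0"
    then show False using assms(4) by simp
  qed
  define g where "g c = (LINT x:(P \<inter> {x. x \<bullet> v \<le> c})|lebesgue. x \<bullet> v)" for c
  have si: "set_integrable lebesgue (P \<inter> {x. x \<bullet> v \<le> c}) (\<lambda>x. x \<bullet> v)" for c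
    by (rule set_integrable_subset[OF int]) (use Pm halfspace_leb in auto)
  have cont: "continuous_on UNIV g" unfolding g_def by (rule g_cont[OF int Pm v])
  have g0: "g 0 \<le> 0"
  proof -
    have "g 0 \<le> (LINT x:(P \<inter> {x. x \<bullet> v \<le> 0})|lebesgue. 0)"
      unfolding g_def by (rule set_integral_mono[OF si]) auto
    then show ?thesis by simp
  qed
  have "(\<lambda>n. g (real n)) \<longlonglongrightarrow> (LINT x:P|lebesgue. x \<bullet> v)"
    unfolding g_def by (rule g_top[OF int Pm])
  then have "eventually (\<lambda>n. g (real n) > 0) sequentially"
    using order_tendstoD(1)[OF _ assms(4)] by blast
  then obtain N where gN: "g (real N) > 0" by (auto simp: eventually_sequentially)
  obtain c where c: "0 \<le> c" "c \<le> real N" "g c = 0"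
    using IVT'[of g 0 0 "real N"] g0 gN continuous_on_subset[OF cont] by fastforce
  show ?thesis
  proof (intro exI[of _ c] conjI allI impI)
    show "(LINT x:(P \<inter> {x. x \<bullet> v \<le> c})|lebesgue. x \<bullet> v) = 0" using c g_def by simp
    fix Q :: "'a set" assume Q: "Q \<in> sets lebesgue" "Q \<subseteq> P" "(LINT x:Q|lebesgue. x \<bullet> v) = 0"
    show "emeasure lebesgue Q \<le> emeasure lebesgue (P \<inter> {x. x \<bullet> v \<le> c})"
    proof (rule bathtub[OF int Pm c(1) refl _ _ Q])
      show "P \<inter> {x. x \<bullet> v \<le> c} \<in> sets lebesgue" using Pm halfspace_leb by blast
      show "(LINT x:(P \<inter> {x. x \<bullet> v \<le> c})|lebesgue. x \<bullet> v) = 0" using c(3) unfolding g_def .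
    qed
  qed
qed

end
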